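(* $\mathsf{GK(A_m)}$ admits cut-elimination: every sequent derivable in $\mathsf{GK(A_m)}$ has a $\mathsf{GK(A_m)}$-derivation containing no application of the rule (cut).
   Context: $\mathcal{L}_{A_m}^{\Box}$-formulas are built from a countably infinite set of variables using binary $\to$ and unary $\Box$. A sequent $\Gamma\Rightarrow\Delta$ is an ordered pair of finite multisets of formulas; $\Gamma,\Delta$ is multiset union, $n\Gamma$ is $\Gamma$ repeated $n$ times, $n[\varphi]$ is $n$ copies of $\varphi$, $\Box\Gamma=[\Box\varphi:\varphi\in\Gamma]$. The calculus $\mathsf{GK(A_m)}$ has rules: (id) $\Delta\Rightarrow\Delta$; (cut) from $\Gamma,\varphi\Rightarrow\Delta$ and $\Pi\Rightarrow\varphi,\Sigma$ infer $\Gamma,\Pi\Rightarrow\Sigma,\Delta$; (mix) from $\Gamma\Rightarrow\Delta$ and $\Pi\Rightarrow\Sigma$ infer $\Gamma,\Pi\Rightarrow\Sigma,\Delta$; (sc$_n$) from $n\Gamma\Rightarrow n\Delta$ infer $\Gamma\Rightarrow\Delta$ ($n\ge2$); ($\to\Rightarrow$) from $\Gamma,\psi\Rightarrow\varphi,\Delta$ infer $\Gamma,\varphi\to\psi\Rightarrow\Delta$; ($\Rightarrow\to$) from $\Gamma,\varphi\Rightarrow\psi,\Delta$ infer $\Gamma\Rightarrow\varphi\to\psi,\Delta$; ($\Box_n$) from $\Gamma\Rightarrow n[\varphi]$ infer $\Box\Gamma\Rightarrow n[\Box\varphi]$ ($n\ge0$). A derivation is a finite tree of sequents in which each node with its parents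 is a rule instance. *)

theory Defs
  imports "HOL-Library.Multiset"
begin

datatype fm = Var nat | Imp fm fm | Box fm

type_synonym sequent = "fm multiset \<times> fm multiset"

text \<open>Derivability in GK(A_m). The flag c says whether (cut) may be used:
  GKder True S  = S derivable in GK(A_m);
  GKder False S = S has a GK(A_m)-derivation with no application of (cut).\<close>
inductive GKder :: "bool \<Rightarrow> sequent \<Rightarrow> bool" for c :: bool where
  ident: "GKder c (D, D)"
| cut: "\<lbrakk> c; GKder c (G + {#phi#}, D); GKder c (P, {#phi#} + S) \<rbrakk>
        \<Longrightarrow> GKder c (G + P, S + D)"
| mix: "\<lbrakk> GKder c (G, D); GKder c (P, S) \<rbrakk> \<Longrightarrow> GKder c (G + P, S + D)"
| sc: "\<lbrakk> n \<ge> 2; GKder c (repeat_mset n G, repeat_mset n D) \<rbrakk> \<Longrightarrow> GKder c (G, D)"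
| impL: "GKder c (G + {#psi#}, {#phi#} + D) \<Longrightarrow> GKder c (G + {#Imp phi psi#}, D)"
| impR: "GKder c (G + {#phi#}, {#psi#} + D) \<Longrightarrow> GKder c (G, {#Imp phi psi#} + D)"
| box: "GKder c (G, replicate_mset n phi) \<Longrightarrow>
        GKder c (image_mset Box G, replicate_mset n (Box phi))"

end

theory Submission
  imports Defs
begin


lemma eqD: "GKder c (G,H) \<Longrightarrow> G = G' \<Longrightarrow> H = H' \<Longrightarrow> GKder c (G',H')" by simp

lemma mix2: "GKder c (G1,H1) \<Longrightarrow> GKder c (G2,H2) \<Longrightarrow> GKder c (G1+G2, H1+H2)"
  using GKder.mix[of c G1 H1 G2 H2] by (simp add: add.commute)

lemma scale: "GKder c (G,H) \<Longrightarrow> GKder c (repeat_mset n G, repeat_mset n H)"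
proof (induction n)
  case 0
  then show ?case using GKder.ident[of c "{#}"] by simp
next
  case (Suc n)
  then show ?case using mix2 by simp
qed

lemma sc1: assumes "n \<ge> 1" "GKder c (repeat_mset n G, repeat_mset n H)" shows "GKder c (G,H)"
proof (cases "n = 1")
  case True
  then show ?thesis using assms by simp
next
  case False
  then show ?thesis using assms GKder.sc[of n c G H] by simp
qed

lemma impL_rep: "GKder c (G + replicate_mset k psi, replicate_mset k phi + H) \<Longrightarrow> GKder c (G + replicate_mset k (Imp phi psi), H)"
proof (induction k arbitrary: G)
  case 0
  then show ?case by simp
next
  case (Suc k)
  have "GKder c ((G + replicate_mset k psi) + {#psi#}, {#phi#} + (replicate_mset k phi + H))"
    using Suc.prems by simp
  then have "GKder c ((G + replicate_mset k psi) + {#Imp phi psi#}, replicate_mset k phi + H)"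
    by (rule GKder.impL)
  then have "GKder c ((G + {#Imp phi psi#}) + replicate_mset k psi, replicate_mset k phi + H)"
    by (simp add: ac_simps)
  from Suc.IH[OF this] show ?case by simp
qed

lemma impR_rep: "GKder c (G + replicate_mset k phi, replicate_mset k psi + H) \<Longrightarrow> GKder c (G, replicate_mset k (Imp phi psi) + H)"
proof (induction k arbitrary: H)
  case 0
  then show ?case by simp
next
  case (Suc k)
  have "GKder c ((G + replicate_mset k phi) + {#phi#}, {#psi#} + (replicate_mset k psi + H))"
    using Suc.prems by simp
  then have "GKder c (G + replicate_mset k phi, {#Imp phi psi#} + (replicate_mset k psi + H))"
    by (rule GKder.impR)
  then have "GKder c (G + replicate_mset k phi, replicate_mset k psi + ({#Imp phi psi#} + H))"
    by (simp add: ac_simps)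
  from Suc.IH[OF this] show ?case by simp
qed

lemma split_plus:
  assumes "G1 + G2 = A + replicate_mset a X"
  shows "\<exists>A1 A2 a1 a2. G1 = A1 + replicate_mset a1 X \<and> G2 = A2 + replicate_mset a2 X \<and> A = A1 + A2 \<and> a = a1 + a2"
proof -
  define a1 where "a1 = min (count G1 X) a"
  define a2 where "a2 = a - a1"
  have c: "count G1 X + count G2 X = count A X + a" using assms
    by (metis count_replicate_mset count_union)
  have s1: "replicate_mset a1 X \<subseteq># G1" by (simp add: a1_def subseteq_mset_def)
  have s2: "replicate_mset a2 X \<subseteq># G2" using c by (auto simp: a1_def a2_def subseteq_mset_def)
  show ?thesis
    apply (rule exI[of _ "G1 - replicate_mset a1 X"], rule exI[of _ "G2 - replicate_mset a2 X"])
    apply (rule exI[of _ a1], rule exI[of _ a2])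
    using s1 s2 assms by (auto simp: a1_def a2_def multiset_eq_iff subseteq_mset_def split: if_splits)
qed

lemma split_imp:
  assumes "G + {#Y#} = A + replicate_mset a X" "Y \<noteq> X"
  shows "\<exists>A'. A = A' + {#Y#} \<and> G = A' + replicate_mset a X"
proof -
  have "Y \<in># A" using assms by (metis add_mset_add_single in_replicate_mset union_iff union_single_eq_member)
  then show ?thesis using assms
    by (metis add_mset_add_single add_right_cancel insert_DiffM2 union_mset_add_mset_left)
qed

fun unbox where "unbox (Box x) = x" | "unbox x = x"

lemma image_box_rep: "image_mset Box C = replicate_mset a (Box chi) \<Longrightarrow> C = replicate_mset a chi"
proof -
  assume h: "image_mset Box C = replicate_mset a (Box chi)"
  have "image_mset unbox (image_mset Box C) = C" by (simp add: multiset.map_comp o_def)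
  with h show ?thesis by simp
qed

lemma box_split:
  assumes "image_mset Box G = A + replicate_mset a (Box chi)"
  shows "\<exists>G'. G = G' + replicate_mset a chi \<and> A = image_mset Box G'"
  using image_mset_eq_plusD[OF assms] image_box_rep by metis

lemma var_not_box: "image_mset Box G = A + replicate_mset a (Var p) \<Longrightarrow> a = 0"
  by (metis (no_types, lifting) fm.distinct(4) imageE in_replicate_mset not_gr0 set_image_mset union_iff)

lemma imp_not_box: "image_mset Box G = A + replicate_mset a (Imp x y) \<Longrightarrow> a = 0"
  by (metis (no_types, lifting) fm.distinct(6) imageE in_replicate_mset not_gr0 set_image_mset union_iff)

lemma rep_split:
  assumes "replicate_mset m Y = replicate_mset b X + E" "b > 0"
  shows "X = Y \<and> b \<le> m \<and> E = replicate_mset (m - b) Y"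
proof -
  have "X \<in># replicate_mset m Y" using assms by (metis in_replicate_mset union_iff)
  then have xy: "X = Y" by (simp split: if_splits)
  have "count (replicate_mset m Y) X = b + count E X" using assms by simp
  then have bm: "b \<le> m" using xy by simp
  have "E = replicate_mset (m - b) Y" using assms xy
  proof (subst multiset_eq_iff, intro allI)
    fix z
    have "count (replicate_mset m Y) z = count (replicate_mset b X) z + count E z" using assms by simp
    then show "count E z = count (replicate_mset (m - b) Y) z" using xy by (simp split: if_splits)
  qed
  with xy bm show ?thesis by simp
qed



lemma replicate_mset_plus: "replicate_mset (a+b) x = replicate_mset a x + replicate_mset b x"
  by (simp add: multiset_eq_iff)

lemma rpt_rep: "repeat_mset n (replicate_mset k x) = replicate_mset (n*k) x"
  by (simp add: multiset_eq_iff)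

lemma inv_impL:
  "GKder False S \<Longrightarrow> fst S = G + replicate_mset k (Imp phi psi) \<Longrightarrow>
   GKder False (G + replicate_mset k psi, replicate_mset k phi + snd S)"
proof (induction arbitrary: G k rule: GKder.induct)
  case (ident D)
  have "GKder False ({#psi#} + {#phi#}, {#psi#} + {#phi#})" by (rule GKder.ident)
  then have "GKder False ({#psi#}, {#Imp phi psi#} + {#phi#})" by (rule GKder.impR)
  then have "GKder False (replicate_mset k psi, replicate_mset k (Imp phi psi) + replicate_mset k phi)"
    using scale[of False "{#psi#}" "{#Imp phi psi#} + {#phi#}" k] by (simp add: ac_simps)
  from mix2[OF GKder.ident[of False G] this] show ?case using ident
    by (simp add: ac_simps)
next
  case (cut G phi D P S)
  then show ?case by simp
next
  case (mix G1 D1 P S')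
  from split_plus[of G1 P G k "Imp phi psi"] mix.prems obtain A1 A2 a1 a2 where
    s: "G1 = A1 + replicate_mset a1 (Imp phi psi)" "P = A2 + replicate_mset a2 (Imp phi psi)" "G = A1 + A2" "k = a1 + a2"
    by auto
  from mix2[OF mix.IH(1)[of A1 a1] mix.IH(2)[of A2 a2]] s show ?case
    by (simp add: ac_simps replicate_mset_plus)
next
  case (sc n G0 D0)
  have "fst (repeat_mset n G0, repeat_mset n D0) = repeat_mset n G + replicate_mset (n*k) (Imp phi psi)"
    using sc.prems by (simp add: rpt_rep)
  from sc.IH[OF this] have "GKder False (repeat_mset n (G + replicate_mset k psi), repeat_mset n (replicate_mset k phi + D0))"
    by (simp add: rpt_rep)
  from sc1[OF _ this] sc.hyps show ?case by simp
next
  case (impL G0 th ch D0)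
  show ?case
  proof (cases "k > 0 \<and> Imp ch th = Imp phi psi")
    case True
    then have e: "ch = phi" "th = psi" by auto
    obtain k' where k': "k = Suc k'" using True not0_implies_Suc by blast
    have "G0 = G + replicate_mset k' (Imp phi psi)" using impL.prems e k' by (simp add: ac_simps)
    then have "fst (G0 + {#th#}, {#ch#} + D0) = (G + {#psi#}) + replicate_mset k' (Imp phi psi)"
      using e by (simp add: ac_simps)
    from impL.IH[OF this] show ?thesis using e k' by (simp add: ac_simps)
  next
    case False
    obtain A' where A': "G = A' + {#Imp ch th#}" "G0 = A' + replicate_mset k (Imp phi psi)"
    proof (cases "k = 0")
      case True
      then show ?thesis using that impL.prems by force
    next
      case False2: False
      then show ?thesis using that split_imp[of G0 "Imp ch th" G k "Imp phi psi"] impL.prems False by auto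
    qed
    have "fst (G0 + {#th#}, {#ch#} + D0) = (A' + {#th#}) + replicate_mset k (Imp phi psi)"
      using A' by (simp add: ac_simps)
    from impL.IH[OF this] have "GKder False ((A' + replicate_mset k psi) + {#th#}, {#ch#} + (replicate_mset k phi + D0))"
      by (simp add: ac_simps)
    then have "GKder False ((A' + replicate_mset k psi) + {#Imp ch th#}, replicate_mset k phi + D0)"
      by (rule GKder.impL)
    then show ?thesis using A' by (simp add: ac_simps)
  qed
next
  case (impR G0 ch th D0)
  have "fst (G0 + {#ch#}, {#th#} + D0) = (G + {#ch#}) + replicate_mset k (Imp phi psi)"
    using impR.prems by (simp add: ac_simps)
  from impR.IH[OF this] have "GKder False ((G + replicate_mset k psi) + {#ch#}, {#th#} + (replicate_mset k phi + D0))"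
    by (simp add: ac_simps)
  then have "GKder False (G + replicate_mset k psi, {#Imp ch th#} + (replicate_mset k phi + D0))"
    by (rule GKder.impR)
  then show ?case by (simp add: ac_simps)
next
  case (box G0 n th)
  have k0: "k = 0" using imp_not_box box.prems by auto
  have "GKder False (image_mset Box G0, replicate_mset n (Box th))" using box.hyps by (rule GKder.box)
  then show ?case using k0 box.prems by simp
qed

lemma inv_impR:
  "GKder False S \<Longrightarrow> snd S = replicate_mset k (Imp phi psi) + H \<Longrightarrow>
   GKder False (fst S + replicate_mset k phi, replicate_mset k psi + H)"
proof (induction arbitrary: H k rule: GKder.induct)
  case (ident D)
  have "GKder False ({#phi#} + {#psi#}, {#phi#} + {#psi#})" by (rule GKder.ident)
  then have "GKder False ({#phi#} + {#Imp phi psi#}, {#psi#})" by (rule GKder.impL)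
  then have "GKder False (replicate_mset k phi + replicate_mset k (Imp phi psi), replicate_mset k psi)"
    using scale[of False "{#phi#} + {#Imp phi psi#}" "{#psi#}" k] by (simp add: ac_simps)
  from mix2[OF GKder.ident[of False H] this] show ?case using ident
    by (simp add: ac_simps)
next
  case (cut G phi D P S)
  then show ?case by simp
next
  case (mix G1 D1 P S')
  from split_plus[of S' D1 H k "Imp phi psi"] mix.prems obtain A1 A2 a1 a2 where
    s: "S' = A1 + replicate_mset a1 (Imp phi psi)" "D1 = A2 + replicate_mset a2 (Imp phi psi)" "H = A1 + A2" "k = a1 + a2"
    by (auto simp: ac_simps)
  from mix2[OF mix.IH(1)[of a2 A2] mix.IH(2)[of a1 A1]] s show ?case
    by (simp add: ac_simps replicate_mset_plus)
next
  case (sc n G0 D0)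
  have "snd (repeat_mset n G0, repeat_mset n D0) = replicate_mset (n*k) (Imp phi psi) + repeat_mset n H"
    using sc.prems by (simp add: rpt_rep)
  from sc.IH[OF this] have "GKder False (repeat_mset n (G0 + replicate_mset k phi), repeat_mset n (replicate_mset k psi + H))"
    by (simp add: rpt_rep)
  from sc1[OF _ this] sc.hyps show ?case by simp
next
  case (impR G0 ch th D0)
  show ?case
  proof (cases "k > 0 \<and> Imp ch th = Imp phi psi")
    case True
    then have e: "ch = phi" "th = psi" by auto
    obtain k' where k': "k = Suc k'" using True not0_implies_Suc by blast
    have "D0 = replicate_mset k' (Imp phi psi) + H" using impR.prems e k' by (simp add: ac_simps)
    then have "snd (G0 + {#ch#}, {#th#} + D0) = replicate_mset k' (Imp phi psi) + (H + {#psi#})"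
      using e by (simp add: ac_simps)
    from impR.IH[OF this] show ?thesis using e k' by (simp add: ac_simps)
  next
    case False
    obtain A' where A': "H = A' + {#Imp ch th#}" "D0 = A' + replicate_mset k (Imp phi psi)"
    proof (cases "k = 0")
      case True
      then show ?thesis using that impR.prems by (force simp: ac_simps)
    next
      case False2: False
      then show ?thesis using that split_imp[of D0 "Imp ch th" H k "Imp phi psi"] impR.prems False by (auto simp: ac_simps)
    qed
    have "snd (G0 + {#ch#}, {#th#} + D0) = replicate_mset k (Imp phi psi) + (A' + {#th#})"
      using A' by (simp add: ac_simps)
    from impR.IH[OF this] have "GKder False ((G0 + replicate_mset k phi) + {#ch#}, {#th#} + (replicate_mset k psi + A'))"
      by (simp add: ac_simps)
    then have "GKder False (G0 + replicate_mset k phi, {#Imp ch th#} + (replicate_mset k psi + A'))"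
      by (rule GKder.impR)
    then show ?thesis using A' by (simp add: ac_simps)
  qed
next
  case (impL G0 th ch D0)
  have "snd (G0 + {#th#}, {#ch#} + D0) = replicate_mset k (Imp phi psi) + (H + {#ch#})"
    using impL.prems by (simp add: ac_simps)
  from impL.IH[OF this] have "GKder False ((G0 + replicate_mset k phi) + {#th#}, {#ch#} + (replicate_mset k psi + H))"
    by (simp add: ac_simps)
  then have "GKder False ((G0 + replicate_mset k phi) + {#Imp ch th#}, replicate_mset k psi + H)"
    by (rule GKder.impL)
  then show ?case by (simp add: ac_simps)
next
  case (box G0 n th)
  have k0: "k = 0" using box.prems 
    by (metis fm.distinct(6) in_replicate_mset not_gr0 snd_conv union_iff)
  have "GKder False (image_mset Box G0, replicate_mset n (Box th))" using box.hyps by (rule GKder.box)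
  then show ?case using k0 box.prems by simp
qed



definition canc :: "fm \<Rightarrow> bool" where
  "canc X \<longleftrightarrow> (\<forall>G H k. GKder False (G + replicate_mset k X, replicate_mset k X + H) \<longrightarrow> GKder False (G, H))"

definition cutp :: "fm \<Rightarrow> bool" where
  "cutp X \<longleftrightarrow> (\<forall>A a B C b E. GKder False (A + replicate_mset a X, B) \<longrightarrow> GKder False (C, replicate_mset b X + E)
      \<longrightarrow> GKder False (repeat_mset b A + repeat_mset a C, repeat_mset b B + repeat_mset a E))"

lemma cancD: "canc X \<Longrightarrow> GKder False (G + replicate_mset k X, replicate_mset k X + H) \<Longrightarrow> GKder False (G, H)"
  unfolding canc_def by blast

lemma cutpD: "cutp X \<Longrightarrow> GKder False (A + replicate_mset a X, B) \<Longrightarrow> GKder False (C, replicate_mset b X + E)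
      \<Longrightarrow> GKder False (repeat_mset b A + repeat_mset a C, repeat_mset b B + repeat_mset a E)"
  unfolding cutp_def by blast

lemma canc_cut: assumes "canc X" shows "cutp X"
  unfolding cutp_def
proof (intro allI impI)
  fix A a B C b E
  assume h1: "GKder False (A + replicate_mset a X, B)" and h2: "GKder False (C, replicate_mset b X + E)"
  from mix2[OF scale[OF h1, of b] scale[OF h2, of a]]
  have "GKder False ((repeat_mset b A + repeat_mset a C) + replicate_mset (a*b) X,
                     replicate_mset (a*b) X + (repeat_mset b B + repeat_mset a E))"
    by (simp add: rpt_rep ac_simps)
  from cancD[OF assms this] show "GKder False (repeat_mset b A + repeat_mset a C, repeat_mset b B + repeat_mset a E)" .
qed

lemma canc_imp: assumes "canc phi" "canc psi" shows "canc (Imp phi psi)"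
  unfolding canc_def
proof (intro allI impI)
  fix G H k
  assume h: "GKder False (G + replicate_mset k (Imp phi psi), replicate_mset k (Imp phi psi) + H)"
  from inv_impL[OF h, of G k] have "GKder False (G + replicate_mset k psi, replicate_mset k phi + (replicate_mset k (Imp phi psi) + H))"
    by simp
  from inv_impR[OF this, of k phi psi "replicate_mset k phi + H"]
  have "GKder False ((G + replicate_mset k phi) + replicate_mset k psi, replicate_mset k psi + (replicate_mset k phi + H))"
    by (simp add: ac_simps)
  from cancD[OF assms(2) this] have "GKder False (G + replicate_mset k phi, replicate_mset k phi + H)" .
  from cancD[OF assms(1) this] show "GKder False (G, H)" .
qed



lemma image_rpt: "image_mset f (repeat_mset n M) = repeat_mset n (image_mset f M)"
  by (induction n) auto

lemma cut_box_inner: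
  assumes cc: "canc chi"
    and p1: "GKder False (G' + replicate_mset a chi, replicate_mset m th)"
    and q1: "GKder False (image_mset Box G' + replicate_mset a (Box chi), replicate_mset m (Box th))"
  shows "GKder False S2 \<Longrightarrow> snd S2 = replicate_mset b (Box chi) + E \<Longrightarrow>
     GKder False (repeat_mset b (image_mset Box G') + repeat_mset a (fst S2),
                  repeat_mset b (replicate_mset m (Box th)) + repeat_mset a E)"
proof (induction arbitrary: b E rule: GKder.induct)
  case (ident M)
  from mix2[OF scale[OF q1, of b] GKder.ident[of False "repeat_mset a E"]] show ?case using ident
    by (simp add: rpt_rep ac_simps)
next
  case (cut G phi D P S)
  then show ?case by simp
next
  case (mix C1 M1 C2 M2)
  from split_plus[of M2 M1 E b "Box chi"] mix.prems obtain E2 E1 b2 b1 where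
    s: "M2 = E2 + replicate_mset b2 (Box chi)" "M1 = E1 + replicate_mset b1 (Box chi)" "E = E2 + E1" "b = b2 + b1"
    by (auto simp: ac_simps)
  from mix2[OF mix.IH(1)[of b1 E1] mix.IH(2)[of b2 E2]] s show ?case
    by (simp add: ac_simps repeat_mset_distrib)
next
  case (sc n C0 M0)
  have "snd (repeat_mset n C0, repeat_mset n M0) = replicate_mset (n*b) (Box chi) + repeat_mset n E"
    using sc.prems by (simp add: rpt_rep)
  from sc.IH[OF this] have "GKder False (repeat_mset n (repeat_mset b (image_mset Box G') + repeat_mset a C0),
        repeat_mset n (repeat_mset b (replicate_mset m (Box th)) + repeat_mset a E))"
    by (simp add: rpt_rep ac_simps)
  from sc1[OF _ this] sc.hyps show ?case by simp
next
  case (impL C0 th' ch' M0)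
  have "snd (C0 + {#th'#}, {#ch'#} + M0) = replicate_mset b (Box chi) + ({#ch'#} + E)"
    using impL.prems by (simp add: ac_simps)
  from impL.IH[OF this] have
    "GKder False ((repeat_mset b (image_mset Box G') + repeat_mset a C0) + replicate_mset a th',
       replicate_mset a ch' + (repeat_mset b (replicate_mset m (Box th)) + repeat_mset a E))"
    by (simp add: ac_simps)
  from impL_rep[OF this] show ?case by (simp add: ac_simps)
next
  case (impR C0 ch' th' M0)
  from split_imp[of M0 "Imp ch' th'" E b "Box chi"] impR.prems obtain E' where
    E': "E = E' + {#Imp ch' th'#}" "M0 = E' + replicate_mset b (Box chi)"
    by (auto simp: ac_simps)
  have "snd (C0 + {#ch'#}, {#th'#} + M0) = replicate_mset b (Box chi) + ({#th'#} + E')"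
    using E' by (simp add: ac_simps)
  from impR.IH[OF this] have
    "GKder False ((repeat_mset b (image_mset Box G') + repeat_mset a C0) + replicate_mset a ch',
       replicate_mset a th' + (repeat_mset b (replicate_mset m (Box th)) + repeat_mset a E'))"
    by (simp add: ac_simps)
  from impR_rep[OF this] show ?case using E' by (simp add: ac_simps)
next
  case (box H0 k ze)
  have q2: "GKder False (image_mset Box H0, replicate_mset k (Box ze))" using box.hyps by (rule GKder.box)
  show ?case
  proof (cases "b = 0")
    case True
    then show ?thesis using scale[OF q2, of a] box.prems by simp
  next
    case False
    from rep_split[of k "Box ze" b "Box chi" E] box.prems False
    have r: "chi = ze" "b \<le> k" "E = replicate_mset (k - b) (Box chi)" by auto
    obtain j where j: "k = b + j" using r(2) le_Suc_ex by blast
    have h2: "GKder False (H0, replicate_mset k chi + {#})" using box.hyps r by simp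
    from cutpD[OF canc_cut[OF cc] p1 h2]
    have "GKder False (repeat_mset k G' + repeat_mset a H0, replicate_mset (k*m) th)"
      by (simp add: rpt_rep)
    then have bx: "GKder False (repeat_mset k (image_mset Box G') + repeat_mset a (image_mset Box H0), replicate_mset (k*m) (Box th))"
      using GKder.box[of False "repeat_mset k G' + repeat_mset a H0" "k*m" th] by (simp add: image_rpt)
    from mix2[OF scale[OF bx, of b] scale[OF q2, of "a*j"]]
    have "GKder False (repeat_mset k (repeat_mset b (image_mset Box G') + repeat_mset a (image_mset Box H0)),
        repeat_mset k (repeat_mset b (replicate_mset m (Box th)) + repeat_mset a E))"
      apply (rule eqD)
      using r j by (simp_all add: multiset_eq_iff rpt_rep algebra_simps)
    from sc1[OF _ this] show ?thesis using False j by simp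
  qed
qed



lemma cut_unit_aux:
  assumes nimp: "\<And>x y. X \<noteq> Imp x y" and bx: "\<And>chi. X = Box chi \<Longrightarrow> canc chi"
    and q2: "GKder False (C, replicate_mset b X + E)"
  shows "GKder False S \<Longrightarrow> fst S = A + replicate_mset a X \<Longrightarrow>
     GKder False (repeat_mset b A + repeat_mset a C, repeat_mset b (snd S) + repeat_mset a E)"
proof (induction arbitrary: A a rule: GKder.induct)
  case (ident M)
  from mix2[OF GKder.ident[of False "repeat_mset b A"] scale[OF q2, of a]] show ?case using ident
    by (simp add: rpt_rep ac_simps)
next
  case (cut G phi D P S)
  then show ?case by simp
next
  case (mix G1 D1 P S')
  from split_plus[of G1 P A a X] mix.prems obtain A1 A2 a1 a2 where
    s: "G1 = A1 + replicate_mset a1 X" "P = A2 + replicate_mset a2 X" "A = A1 + A2" "a = a1 + a2"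
    by auto
  from mix2[OF mix.IH(1)[of A1 a1] mix.IH(2)[of A2 a2]] s show ?case
    by (simp add: ac_simps repeat_mset_distrib)
next
  case (sc n G0 D0)
  have "fst (repeat_mset n G0, repeat_mset n D0) = repeat_mset n A + replicate_mset (n*a) X"
    using sc.prems by (simp add: rpt_rep)
  from sc.IH[OF this] have "GKder False (repeat_mset n (repeat_mset b A + repeat_mset a C),
        repeat_mset n (repeat_mset b D0 + repeat_mset a E))"
    by (simp add: rpt_rep ac_simps)
  from sc1[OF _ this] sc.hyps show ?case by simp
next
  case (impL G0 th ch D0)
  from split_imp[of G0 "Imp ch th" A a X] impL.prems nimp obtain A' where
    A': "A = A' + {#Imp ch th#}" "G0 = A' + replicate_mset a X" by auto
  have "fst (G0 + {#th#}, {#ch#} + D0) = (A' + {#th#}) + replicate_mset a X"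
    using A' by (simp add: ac_simps)
  from impL.IH[OF this] have
    "GKder False ((repeat_mset b A' + repeat_mset a C) + replicate_mset b th,
       replicate_mset b ch + (repeat_mset b D0 + repeat_mset a E))"
    by (simp add: ac_simps)
  from impL_rep[OF this] show ?case using A' by (simp add: ac_simps)
next
  case (impR G0 ch th D0)
  have "fst (G0 + {#ch#}, {#th#} + D0) = (A + {#ch#}) + replicate_mset a X"
    using impR.prems by (simp add: ac_simps)
  from impR.IH[OF this] have
    "GKder False ((repeat_mset b A + repeat_mset a C) + replicate_mset b ch,
       replicate_mset b th + (repeat_mset b D0 + repeat_mset a E))"
    by (simp add: ac_simps)
  from impR_rep[OF this] show ?case by (simp add: ac_simps)
next
  case (box G m th)
  have q1: "GKder False (image_mset Box G, replicate_mset m (Box th))" using box.hyps by (rule GKder.box)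
  show ?case
  proof (cases "a = 0")
    case True
    then show ?thesis using scale[OF q1, of b] box.prems by simp
  next
    case False
    then have "X \<in># image_mset Box G" using box.prems
      by (metis fst_conv in_replicate_mset neq0_conv union_iff)
    then obtain chi where X: "X = Box chi" by auto
    from box_split[of G A a chi] box.prems X obtain G' where
      G': "G = G' + replicate_mset a chi" "A = image_mset Box G'" by auto
    have p1: "GKder False (G' + replicate_mset a chi, replicate_mset m th)" using box.hyps G' by simp
    have q1': "GKder False (image_mset Box G' + replicate_mset a (Box chi), replicate_mset m (Box th))"
      using q1 G' by simp
    from cut_box_inner[OF bx[OF X] p1 q1', of "(C, replicate_mset b X + E)" b E] q2 X G'
    show ?thesis by simp
  qed
qed

lemma cut_unit:
  assumes nimp: "\<And>x y. X \<noteq> Imp x y" and bx: "\<And>chi. X = Box chi \<Longrightarrow> canc chi"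
  shows "cutp X"
  unfolding cutp_def
  using cut_unit_aux[OF nimp bx] by fastforce

lemma combine:
  assumes cx: "cutp X"
    and h1: "GKder False (G1 + replicate_mset u1 X, replicate_mset v1 X + H1)"
    and h2: "GKder False (G2 + replicate_mset u2 X, replicate_mset v2 X + H2)"
    and o1: "u1 = 0 \<or> v1 = 0" and o2: "u2 = 0 \<or> v2 = 0"
  shows "GKder False (G1 + G2 + replicate_mset ((u1+u2) - (v1+v2)) X, replicate_mset ((v1+v2) - (u1+u2)) X + (H1 + H2))"
proof -
  consider "v1 = 0 \<and> v2 = 0" | "u1 = 0 \<and> u2 = 0" | "v1 = 0 \<and> u2 = 0 \<and> u1 > 0 \<and> v2 > 0"
    | "u1 = 0 \<and> v2 = 0 \<and> v1 > 0 \<and> u2 > 0" using o1 o2 by (metis gr0I)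
  then show ?thesis
  proof cases
    case 1
    then show ?thesis using mix2[OF h1 h2] by (simp add: ac_simps replicate_mset_plus)
  next
    case 2
    then show ?thesis using mix2[OF h1 h2] by (simp add: ac_simps replicate_mset_plus)
  next
    case 3
    define m where "m = min u1 v2"
    have m1: "m \<ge> 1" using 3 by (simp add: m_def)
    have f1: "GKder False ((G1 + replicate_mset (u1 - m) X) + replicate_mset m X, H1)"
      using h1 3 by (simp add: m_def replicate_mset_plus[symmetric] ac_simps)
    have f2: "GKder False (G2, replicate_mset m X + (replicate_mset (v2 - m) X + H2))"
      using h2 3 by (simp add: m_def replicate_mset_plus[symmetric] add.assoc[symmetric])
    from cutpD[OF cx f1 f2] have "GKder False (repeat_mset m (G1 + G2 + replicate_mset ((u1+u2) - (v1+v2)) X),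
         repeat_mset m (replicate_mset ((v1+v2) - (u1+u2)) X + (H1 + H2)))"
      apply (rule eqD) using 3 by (auto simp: m_def ac_simps min_def)
    from sc1[OF m1 this] show ?thesis .
  next
    case 4
    define m where "m = min u2 v1"
    have m1: "m \<ge> 1" using 4 by (simp add: m_def)
    have f1: "GKder False ((G2 + replicate_mset (u2 - m) X) + replicate_mset m X, H2)"
      using h2 4 by (simp add: m_def replicate_mset_plus[symmetric] ac_simps)
    have f2: "GKder False (G1, replicate_mset m X + (replicate_mset (v1 - m) X + H1))"
      using h1 4 by (simp add: m_def replicate_mset_plus[symmetric] add.assoc[symmetric])
    from cutpD[OF cx f1 f2] have "GKder False (repeat_mset m (G1 + G2 + replicate_mset ((u1+u2) - (v1+v2)) X),
         repeat_mset m (replicate_mset ((v1+v2) - (u1+u2)) X + (H1 + H2)))"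
      apply (rule eqD) using 4 by (auto simp: m_def ac_simps min_def)
    from sc1[OF m1 this] show ?thesis .
  qed
qed



lemma canc_unit_aux:
  assumes nimp: "\<And>x y. X \<noteq> Imp x y" and bx: "\<And>chi. X = Box chi \<Longrightarrow> canc chi"
    and cx: "cutp X"
  shows "GKder False S \<Longrightarrow> fst S = G + replicate_mset a X \<Longrightarrow> snd S = replicate_mset b X + H \<Longrightarrow>
     GKder False (G + replicate_mset (a - b) X, replicate_mset (b - a) X + H)"
proof (induction arbitrary: G H a b rule: GKder.induct)
  case (ident M)
  have "G + replicate_mset (a - b) X = replicate_mset (b - a) X + H"
  proof (subst multiset_eq_iff, intro allI)
    fix y
    have "count (G + replicate_mset a X) y = count (replicate_mset b X + H) y" using ident by simp
    then show "count (G + replicate_mset (a - b) X) y = count (replicate_mset (b - a) X + H) y"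
      by (simp split: if_splits)
  qed
  then show ?case using GKder.ident[of False "G + replicate_mset (a - b) X"] by simp
next
  case (cut G phi D P S)
  then show ?case by simp
next
  case (mix G1 D1 P S')
  from split_plus[of G1 P G a X] mix.prems obtain A1 A2 a1 a2 where
    s: "G1 = A1 + replicate_mset a1 X" "P = A2 + replicate_mset a2 X" "G = A1 + A2" "a = a1 + a2"
    by auto
  from split_plus[of S' D1 H b X] mix.prems obtain H2 H1 b2 b1 where
    t: "S' = H2 + replicate_mset b2 X" "D1 = H1 + replicate_mset b1 X" "H = H2 + H1" "b = b2 + b1"
    by (auto simp: ac_simps)
  have i1: "GKder False (A1 + replicate_mset (a1 - b1) X, replicate_mset (b1 - a1) X + H1)"
    using mix.IH(1)[of A1 a1 b1 H1] s t by (simp add: ac_simps)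
  have i2: "GKder False (A2 + replicate_mset (a2 - b2) X, replicate_mset (b2 - a2) X + H2)"
    using mix.IH(2)[of A2 a2 b2 H2] s t by (simp add: ac_simps)
  from combine[OF cx i1 i2] have
    "GKder False (A1 + A2 + replicate_mset ((a1 - b1 + (a2 - b2)) - (b1 - a1 + (b2 - a2))) X,
       replicate_mset ((b1 - a1 + (b2 - a2)) - (a1 - b1 + (a2 - b2))) X + (H1 + H2))" by (metis nat_le_linear diff_is_0_eq)
  moreover have "(a1 - b1 + (a2 - b2)) - (b1 - a1 + (b2 - a2)) = a - b" using s t by arith
  moreover have "(b1 - a1 + (b2 - a2)) - (a1 - b1 + (a2 - b2)) = b - a" using s t by arith
  ultimately show ?case using s t by (simp add: ac_simps)
next
  case (sc n G0 D0)
  have "GKder False (repeat_mset n G + replicate_mset (n*a - n*b) X, replicate_mset (n*b - n*a) X + repeat_mset n H)"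
    using sc.IH[of "repeat_mset n G" "n*a" "n*b" "repeat_mset n H"] sc.prems by (simp add: rpt_rep)
  then have "GKder False (repeat_mset n (G + replicate_mset (a - b) X), repeat_mset n (replicate_mset (b - a) X + H))"
    by (simp add: rpt_rep diff_mult_distrib2)
  from sc1[OF _ this] sc.hyps show ?case by simp
next
  case (impL G0 th ch D0)
  from split_imp[of G0 "Imp ch th" G a X] impL.prems nimp obtain A' where
    A': "G = A' + {#Imp ch th#}" "G0 = A' + replicate_mset a X" by auto
  from impL.IH[of "A' + {#th#}" a b "{#ch#} + H"] A' impL.prems have
    "GKder False ((A' + replicate_mset (a - b) X) + {#th#}, {#ch#} + (replicate_mset (b - a) X + H))"
    by (simp add: ac_simps)
  then have "GKder False ((A' + replicate_mset (a - b) X) + {#Imp ch th#}, replicate_mset (b - a) X + H)"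
    by (rule GKder.impL)
  then show ?case using A' by (simp add: ac_simps)
next
  case (impR G0 ch th D0)
  from split_imp[of D0 "Imp ch th" H b X] impR.prems nimp obtain H' where
    H': "H = H' + {#Imp ch th#}" "D0 = H' + replicate_mset b X" by (auto simp: ac_simps)
  from impR.IH[of "G + {#ch#}" a b "{#th#} + H'"] H' impR.prems have
    "GKder False ((G + replicate_mset (a - b) X) + {#ch#}, {#th#} + (replicate_mset (b - a) X + H'))"
    by (simp add: ac_simps)
  then have "GKder False (G + replicate_mset (a - b) X, {#Imp ch th#} + (replicate_mset (b - a) X + H'))"
    by (rule GKder.impR)
  then show ?case using H' by (simp add: ac_simps)
next
  case (box Ga m th)
  have q1: "GKder False (image_mset Box Ga, replicate_mset m (Box th))" using box.hyps by (rule GKder.box)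
  show ?case
  proof (cases "b = 0")
    case True
    then show ?thesis using q1 box.prems by simp
  next
    case False
    from rep_split[of m "Box th" b X H] box.prems False
    have r: "X = Box th" "b \<le> m" "H = replicate_mset (m - b) (Box th)" by auto
    from box_split[of Ga G a th] box.prems r obtain G' where
      G': "Ga = G' + replicate_mset a th" "G = image_mset Box G'" by auto
    define c where "c = min a b"
    have e1: "replicate_mset (a - c) th + replicate_mset c th = replicate_mset a th"
      by (simp add: c_def replicate_mset_plus[symmetric])
    have e2: "replicate_mset c th + replicate_mset (m - c) th = replicate_mset m th"
      using r(2) by (simp add: c_def replicate_mset_plus[symmetric])
    have "GKder False ((G' + replicate_mset (a - c) th) + replicate_mset c th, replicate_mset c th + replicate_mset (m - c) th)"
      using box.hyps G' r by (simp only: e1 e2 add.assoc)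
    from cancD[OF bx[OF r(1)] this] have "GKder False (G' + replicate_mset (a - c) th, replicate_mset (m - c) th)" .
    from GKder.box[OF this] have "GKder False (image_mset Box G' + replicate_mset (a - c) (Box th), replicate_mset (m - c) (Box th))"
      by simp
    moreover have "a - c = a - b" using r(2) by (auto simp: c_def)
    moreover have "m - c = (b - a) + (m - b)" using r(2) by (auto simp: c_def)
    then have "replicate_mset (m - c) (Box th) = replicate_mset (b - a) (Box th) + replicate_mset (m - b) (Box th)"
      by (simp only: replicate_mset_plus)
    ultimately show ?thesis using G' r by simp
  qed
qed

lemma canc_all: "canc X"
proof (induction X)
  case (Var p)
  have cx: "cutp (Var p)" by (rule cut_unit) auto
  show ?case unfolding canc_def
  proof (intro allI impI)
    fix G H k assume "GKder False (G + replicate_mset k (Var p), replicate_mset k (Var p) + H)"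
    from canc_unit_aux[OF _ _ cx this, of G k k H] show "GKder False (G, H)" by simp
  qed
next
  case (Imp x1 x2)
  then show ?case by (rule canc_imp)
next
  case (Box X)
  have cx: "cutp (Box X)" by (rule cut_unit) (use Box in auto)
  show ?case unfolding canc_def
  proof (intro allI impI)
    fix G H k assume "GKder False (G + replicate_mset k (Box X), replicate_mset k (Box X) + H)"
    from canc_unit_aux[OF _ _ cx this, of G k k H] Box show "GKder False (G, H)" by simp
  qed
qed

theorem theorem4p6:
  fixes S :: sequent
  assumes "GKder True S"
  shows "GKder False S"
  using assms
proof (induction rule: GKder.induct)
  case (ident D)
  then show ?case by (rule GKder.ident)
next
  case (cut G phi D P S)
  from mix2[OF cut.IH(1) cut.IH(2)] have "GKder False ((G + P) + replicate_mset 1 phi, replicate_mset 1 phi + (S + D))"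
    by (simp add: ac_simps)
  from cancD[OF canc_all this] show ?case .
next
  case (mix G D P S)
  then show ?case using GKder.mix by blast
next
  case (sc n G D)
  then show ?case using GKder.sc by blast
next
  case (impL G psi phi D)
  then show ?case using GKder.impL by blast
next
  case (impR G phi psi D)
  then show ?case using GKder.impR by blast
next
  case (box G n phi)
  then show ?case using GKder.box by blast
qed


end
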